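(* Let $A\in\mathbb{R}^{n\times n}$, ${\mathbf w}\in\mathbb{R}^n$, $T>0$, and let $D$ be a linear differential operator in the time variable $t$ (for instance $\frac{\mathrm d}{\mathrm dt}$ or $\frac{\mathrm d^2}{\mathrm dt^2}$), acting componentwise on vector-valued functions. Let $\mathcal{V}_1\subseteq\dots\subseteq\mathcal{V}_m\subseteq\mathcal{V}_{m+1}\subseteq\mathbb{R}^n$ be nested subspaces with $d_i=\dim(\mathcal{V}_i)$ ($d_0=0$), such that ${\mathbf w}\in\mathcal{V}_1$ and $A\mathcal{V}_i\subseteq\mathcal{V}_{i+1}$ for all $i=1,\dots,m$. Let $\langle\cdot,\cdot\rangle_\ast$ be an inner product on $\mathcal{V}_{m+1}$ with induced norm $\|\cdot\|_\ast$, and let $U_{m+1}=[\mathcal{U}_1,\dots,\mathcal{U}_{m+1}]$, $\mathcal{U}_j\in\mathbb{R}^{n\times b_j}$, $b_j=d_j-d_{j-1}$, be a nested $\langle\cdot,\cdot\rangle_\ast$-orthonormal basis of $\mathcal{V}_{m+1}$, i.e. $U_i=[\mathcal{U}_1,\dots,\mathcal{U}_i]$ is a $\langle\cdot,\cdot\rangle_\ast$-orthonormal basis of $\mathcal{V}_i$ for each $i\le m+1$. Let ${\mathbf y}_m:[0,T]\to\mathcal{V}_m$ be a (sufficiently differentiable) function whose residual ${\mathbf r}_m(t):=-D{\mathbf y}_m(t)-A{\mathbf y}_m(t)+{\mathbf w}$ satisfies $\langle{\mathbf v},{\mathbf r}_m(t)\rangle_\ast=0$ for all ${\mathbf v}\in\mathcal{V}_m$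 and all $t\in[0,T]$, and write ${\mathbf y}_m(t)=U_m{\mathbf x}_m(t)$ with ${\mathbf x}_m:[0,T]\to\mathbb{R}^{d_m}$. Define $\boldsymbol{\beta}_m(t) = -\,\mathcal{U}_{m+1}^\ast A\,\mathcal{U}_m\,[{\mathbf x}_m(t)]_{d_{m-1}+1:d_m}$. Then for all $t\in[0,T]$, \[ \|{\mathbf r}_m(t)\|_\ast = \|\boldsymbol{\beta}_m(t)\|, \] where $\|\cdot\|$ is the Euclidean norm.
   Context: For a matrix $W=[{\mathbf w}_1,\dots,{\mathbf w}_k]$ with columns in $\mathcal{V}_{m+1}$, $W^\ast$ denotes the adjoint with respect to $\langle\cdot,\cdot\rangle_\ast$: it maps ${\mathbf x}\in\mathcal{V}_{m+1}$ to $(\langle{\mathbf w}_1,{\mathbf x}\rangle_\ast,\dots,\langle{\mathbf w}_k,{\mathbf x}\rangle_\ast)^{\top}$; so $\mathcal{U}_{m+1}^\ast A\,\mathcal{U}_m$ is the $b_{m+1}\times b_m$ matrix with entries $\langle{\mathbf u},A{\mathbf u}'\rangle_\ast$ for columns ${\mathbf u}$ of $\mathcal{U}_{m+1}$ and ${\mathbf u}'$ of $\mathcal{U}_m$. For a vector ${\mathbf v}$, $[{\mathbf v}]_{i:j}$ denotes the subvector of entries $i,\dots,j$. *)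

theory Defs
  imports "HOL-Analysis.Analysis"
begin

definition inner_product_on :: "('a::real_vector) set \<Rightarrow> ('a \<Rightarrow> 'a \<Rightarrow> real) \<Rightarrow> bool" where
  "inner_product_on V ip \<longleftrightarrow>
     (\<forall>x\<in>V. \<forall>y\<in>V. ip x y = ip y x) \<and>
     (\<forall>x\<in>V. \<forall>y\<in>V. \<forall>z\<in>V. ip (x + y) z = ip x z + ip y z) \<and>
     (\<forall>x\<in>V. \<forall>z\<in>V. \<forall>a::real. ip (a *\<^sub>R x) z = a * ip x z) \<and>
     (\<forall>x\<in>V. x \<noteq> 0 \<longrightarrow> ip x x > 0)"

fun hder :: "real \<Rightarrow> nat \<Rightarrow> (real \<Rightarrow> 'a::real_normed_vector) \<Rightarrow> real \<Rightarrow> 'a" where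
  "hder T 0 f = f"
| "hder T (Suc k) f = (\<lambda>t. vector_derivative (hder T k f) (at t within {0..T}))"

definition diffop :: "real \<Rightarrow> nat \<Rightarrow> (nat \<Rightarrow> real \<Rightarrow> real) \<Rightarrow> (real \<Rightarrow> 'a::real_normed_vector) \<Rightarrow> real \<Rightarrow> 'a" where
  "diffop T K c f t = (\<Sum>k\<le>K. c k t *\<^sub>R hder T k f t)"

end

theory Submission
  imports Defs
begin

lemma deriv_in_subspace:
  fixes f :: "real \<Rightarrow> 'a::euclidean_space"
  assumes S: "subspace S" and T: "T > 0" and fS: "\<forall>s\<in>{0..T}. f s \<in> S"
    and dif: "f differentiable (at t within {0..T})" and t: "t \<in> {0..T}"
  shows "vector_derivative f (at t within {0..T}) \<in> S"
proof -
  define f' where "f' = vector_derivative f (at t within {0..T})"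
  have D: "(f has_vector_derivative f') (at t within {0..T})"
    using dif vector_derivative_works f'_def by blast
  obtain p q where p: "p \<in> span S" and q: "\<And>w. w \<in> span S \<Longrightarrow> orthogonal q w" and pq: "f' = p + q"
    using orthogonal_subspace_decomp_exists by blast
  have D1: "((\<lambda>s. q \<bullet> f s) has_vector_derivative q \<bullet> f') (at t within {0..T})"
    using bounded_linear.has_vector_derivative[OF bounded_linear_inner_right D] .
  have D2: "((\<lambda>s. q \<bullet> f s) has_vector_derivative 0) (at t within {0..T})"
  proof (rule has_vector_derivative_transform_within[where d=1 and f="\<lambda>_. 0"])
    show "((\<lambda>_. 0::real) has_vector_derivative 0) (at t within {0..T})" by simp
    fix s assume "s \<in> {0..T}"
    then have "f s \<in> span S" using fS span_base by blast
    then show "0 = q \<bullet> f s" using q orthogonal_def by auto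
  qed (use t in auto)
  have nb: "at t within {0..T} \<noteq> bot"
    using T t by (simp add: trivial_limit_within)
  have "q \<bullet> f' = 0" using vector_derivative_unique_within[OF nb D1 D2] .
  moreover have "q \<bullet> p = 0" using q[OF p] orthogonal_def by auto
  ultimately have "q \<bullet> q = 0" using pq by (simp add: inner_add_right)
  then have "q = 0" by simp
  then show ?thesis using pq p S f'_def by (metis add.right_neutral span_eq_iff)
qed

lemma ipD:
  assumes "inner_product_on V ip"
  shows "\<forall>x\<in>V. \<forall>y\<in>V. ip x y = ip y x"
    and "\<forall>x\<in>V. \<forall>y\<in>V. \<forall>z\<in>V. ip (x + y) z = ip x z + ip y z"
    and "\<forall>x\<in>V. \<forall>z\<in>V. \<forall>a::real. ip (a *\<^sub>R x) z = a * ip x z"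
  using assms unfolding inner_product_on_def by simp_all

lemma ip_zero_left:
  assumes "inner_product_on V ip" "subspace V" "z \<in> V" shows "ip 0 z = 0"
proof -
  have "ip ((0::real) *\<^sub>R 0) z = 0 * ip 0 z"
    using ipD(3)[OF assms(1)] subspace_0[OF assms(2)] assms(3) by blast
  then show ?thesis by simp
qed

lemma ip_sym:
  assumes "inner_product_on V ip" "x \<in> V" "y \<in> V" shows "ip x y = ip y x"
  using ipD(1)[OF assms(1)] assms(2,3) by blast

lemma ip_lin_right:
  assumes "inner_product_on V ip" "subspace V" "z \<in> V" "p \<in> V" "q \<in> V"
  shows "ip z (a *\<^sub>R p + q) = a * ip z p + ip z q"
proof -
  have "a *\<^sub>R p \<in> V" using assms subspace_scale by blast
  then have "ip (a *\<^sub>R p + q) z = ip (a *\<^sub>R p) z + ip q z"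
    using ipD(2)[OF assms(1)] \<open>a *\<^sub>R p \<in> V\<close> assms(3,5) by blast
  also have "\<dots> = a * ip p z + ip q z"
    using ipD(3)[OF assms(1)] assms(3,4) by simp
  moreover have "a *\<^sub>R p + q \<in> V" using assms \<open>a *\<^sub>R p \<in> V\<close> subspace_add by blast
  ultimately show ?thesis
    using ip_sym[OF assms(1) assms(3)] assms by simp
qed

lemma ip_sum_right:
  assumes ip: "inner_product_on V ip" and S: "subspace V" and z: "z \<in> V"
    and fin: "finite J" and f: "\<forall>j\<in>J. f j \<in> V"
  shows "ip z (\<Sum>j\<in>J. a j *\<^sub>R f j) = (\<Sum>j\<in>J. a j * ip z (f j))"
  using fin f
proof (induction J rule: finite_induct)
  case empty
  then show ?case using ip_zero_left[OF ip S z] ip_sym[OF ip z subspace_0[OF S]] by simp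
next
  case (insert j J)
  have sV: "(\<Sum>j\<in>J. a j *\<^sub>R f j) \<in> V"
    using insert S by (auto intro!: subspace_sum subspace_scale)
  have "ip z (\<Sum>j\<in>insert j J. a j *\<^sub>R f j) = ip z (a j *\<^sub>R f j + (\<Sum>j\<in>J. a j *\<^sub>R f j))"
    using insert by simp
  also have "\<dots> = a j * ip z (f j) + ip z (\<Sum>j\<in>J. a j *\<^sub>R f j)"
    using ip_lin_right[OF ip S z _ sV] insert by auto
  finally show ?case using insert by simp
qed

theorem corollary3p2:
  fixes A :: "real^'n^'n" and w :: "real^'n" and T :: real
    and K :: nat and c :: "nat \<Rightarrow> real \<Rightarrow> real"
    and m :: nat and V :: "nat \<Rightarrow> (real^'n) set" and d :: "nat \<Rightarrow> nat"
    and ip :: "real^'n \<Rightarrow> real^'n \<Rightarrow> real"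
    and u :: "nat \<Rightarrow> real^'n"
    and y :: "real \<Rightarrow> real^'n" and x :: "real \<Rightarrow> nat \<Rightarrow> real"
  assumes T_pos: "T > 0"
    and m_pos: "m \<ge> 1"
    and subsp: "\<forall>i\<in>{1..m+1}. subspace (V i)"
    and nested: "\<forall>i\<in>{1..m}. V i \<subseteq> V (Suc i)"
    and d0: "d 0 = 0"
    and d_dim: "\<forall>i\<in>{1..m+1}. d i = dim (V i)"
    and w_in: "w \<in> V 1"
    and A_inv: "\<forall>i\<in>{1..m}. (\<lambda>v. A *v v) ` V i \<subseteq> V (Suc i)"
    and ip: "inner_product_on (V (m+1)) ip"
    and basis_in: "\<forall>i\<in>{1..m+1}. u ` {..<d i} \<subseteq> V i"
    and basis_span: "\<forall>i\<in>{1..m+1}. span (u ` {..<d i}) = V i"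
    and orthonormal: "\<forall>j<d (m+1). \<forall>k<d (m+1). ip (u j) (u k) = (if j = k then 1 else 0)"
    and y_in: "\<forall>t\<in>{0..T}. y t \<in> V m"
    and y_smooth: "\<forall>k<K. \<forall>t\<in>{0..T}. hder T k y differentiable (at t within {0..T})"
    and galerkin: "\<forall>t\<in>{0..T}. \<forall>v\<in>V m.
                     ip v (- diffop T K c y t - A *v y t + w) = 0"
    and y_coords: "\<forall>t\<in>{0..T}. y t = (\<Sum>k<d m. x t k *\<^sub>R u k)"
  shows "\<forall>t\<in>{0..T}.
           sqrt (ip (- diffop T K c y t - A *v y t + w) (- diffop T K c y t - A *v y t + w))
           = sqrt (\<Sum>j\<in>{d m..<d (m+1)}.
                     (- (\<Sum>k\<in>{d (m-1)..<d m}. ip (u j) (A *v u k) * x t k))\<^sup>2)"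
proof
  fix t assume t: "t \<in> {0..T}"
  define N where "N = d (m+1)"
  define M where "M = d m"
  define M' where "M' = d (m-1)"
  define r where "r = - diffop T K c y t - A *v y t + w"
  have Vs: "subspace (V i)" if "1 \<le> i" "i \<le> m+1" for i using subsp that by auto
  have chain: "V i \<subseteq> V j" if "1 \<le> i" "i \<le> j" "j \<le> m+1" for i j
    using that
  proof (induction j)
    case 0 then show ?case by simp
  next
    case (Suc j)
    show ?case
    proof (cases "i = Suc j")
      case True then show ?thesis by simp
    next
      case False
      then have "V i \<subseteq> V j" using Suc by auto
      moreover have "V j \<subseteq> V (Suc j)" using nested Suc False by auto
      ultimately show ?thesis by blast
    qed
  qed
  have SV: "subspace (V (m+1))" using Vs m_pos by auto
  have SVm: "subspace (V m)" using Vs m_pos by auto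
  have VmV: "V m \<subseteq> V (m+1)" using chain m_pos by auto
  have hder_in: "\<forall>s\<in>{0..T}. hder T k y s \<in> V m" if "k \<le> K" for k
    using that
  proof (induction k)
    case 0 then show ?case using y_in by simp
  next
    case (Suc k)
    show ?case
    proof
      fix s assume s: "s \<in> {0..T}"
      have "hder T k y differentiable (at s within {0..T})" using y_smooth Suc s by auto
      then show "hder T (Suc k) y s \<in> V m"
        using deriv_in_subspace[OF SVm T_pos _ _ s] Suc by auto
    qed
  qed
  have Dy: "diffop T K c y t \<in> V m"
    unfolding diffop_def using hder_in t SVm
    by (auto intro!: subspace_sum subspace_scale)
  have ytV: "y t \<in> V m" using y_in t by auto
  have AVm: "(\<lambda>v. A *v v) ` V m \<subseteq> V (Suc m)" using A_inv m_pos by auto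
  then have Ay: "A *v y t \<in> V (m+1)" using ytV by auto
  have wm: "w \<in> V m" using w_in chain[of 1 m] m_pos by auto
  have rV: "r \<in> V (m+1)"
  proof -
    have "- diffop T K c y t \<in> V (m+1)" using Dy VmV subspace_neg[OF SV] by blast
    then have "- diffop T K c y t - A *v y t \<in> V (m+1)" using Ay subspace_diff[OF SV] by blast
    then show ?thesis unfolding r_def using wm VmV subspace_add[OF SV] by blast
  qed
  have dm: "d m = dim (V m)" "d (m+1) = dim (V (m+1))" using d_dim m_pos by auto
  have MN: "M \<le> N" unfolding M_def N_def dm using VmV by (rule dim_subset)
  have M'M: "M' \<le> M"
  proof (cases "m = 1")
    case True then show ?thesis unfolding M'_def using d0 by simp
  next
    case False
    then have sub: "V (m-1) \<subseteq> V m" using chain[of "m-1" m] m_pos by auto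
    have "m-1 \<in> {1..m+1}" using m_pos False by auto
    then have "d (m-1) = dim (V (m-1))" using d_dim by blast
    then show ?thesis unfolding M'_def M_def dm using dim_subset[OF sub] by simp
  qed
  have bi1: "u ` {..<N} \<subseteq> V (m+1)" unfolding N_def using basis_in m_pos by auto
  have bi2: "u ` {..<M} \<subseteq> V m" unfolding M_def using basis_in m_pos by auto
  have uV: "u j \<in> V (m+1)" if "j < N" for j using bi1 that by auto
  have uVm: "u j \<in> V m" if "j < M" for j using bi2 that by auto
  have on: "ip (u j) (u k) = (if j = k then 1 else 0)" if "j < N" "k < N" for j k
    using orthonormal that N_def by auto
  have inj: "inj_on u {..<N}"
  proof (rule inj_onI)
    fix j k assume "j \<in> {..<N}" "k \<in> {..<N}" "u j = u k"
    then show "j = k" using on[of j k] on[of k k] by (metis lessThan_iff zero_neq_one)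
  qed
  obtain a where ra: "r = (\<Sum>v\<in>u ` {..<N}. a v *\<^sub>R v)"
    using rV basis_span span_finite[of "u ` {..<N}"] N_def m_pos by auto
  have r_exp: "r = (\<Sum>j<N. a (u j) *\<^sub>R u j)"
    using ra sum.reindex[OF inj] by (simp add: o_def)
  have coef: "ip (u i) r = a (u i)" if "i < N" for i
  proof -
    have "ip (u i) r = (\<Sum>j<N. a (u j) * ip (u i) (u j))"
      unfolding r_exp using ip_sum_right[OF ip SV uV[OF that], of "{..<N}" u "\<lambda>j. a (u j)"] uV by simp
    also have "\<dots> = (\<Sum>j<N. if j = i then a (u j) else 0)"
      using on that by (intro sum.cong) auto
    finally show ?thesis using that by simp
  qed
  have rr: "ip r r = (\<Sum>j<N. (ip (u j) r)\<^sup>2)"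
  proof -
    have "ip r r = (\<Sum>j<N. a (u j) * ip r (u j))"
      using ip_sum_right[OF ip SV rV, of "{..<N}" u "\<lambda>j. a (u j)"] r_exp uV by auto
    also have "\<dots> = (\<Sum>j<N. (ip (u j) r)\<^sup>2)"
      using coef ip_sym[OF ip rV uV] by (intro sum.cong) (auto simp: power2_eq_square)
    finally show ?thesis .
  qed
  have gal0: "ip (u j) r = 0" if "j < M" for j
    using galerkin t uVm[OF that] unfolding r_def by auto
  have split: "{..<N} = {..<M} \<union> {M..<N}" using MN by auto
  have rr2: "ip r r = (\<Sum>j\<in>{M..<N}. (ip (u j) r)\<^sup>2)"
    unfolding rr split by (subst sum.union_disjoint) (auto simp: gal0)
  have orthVm: "ip (u j) v = 0" if j: "j \<in> {M..<N}" and v: "v \<in> V m" for j v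
  proof -
    have "v \<in> span (u ` {..<M})" using basis_span v M_def m_pos by auto
    then obtain b where vb: "v = (\<Sum>z\<in>u ` {..<M}. b z *\<^sub>R z)"
      using span_finite[of "u ` {..<M}"] by auto
    have "ip (u j) v = (\<Sum>z\<in>u ` {..<M}. b z * ip (u j) z)"
      unfolding vb using ip_sum_right[OF ip SV uV[of j], of "u ` {..<M}" "\<lambda>z. z" b] j bi2 VmV by auto
    also have "\<dots> = 0"
    proof (rule sum.neutral, rule ballI)
      fix z assume "z \<in> u ` {..<M}"
      then obtain k where "k < M" "z = u k" by auto
      then show "b z * ip (u j) z = 0" using on[of j k] j MN by auto
    qed
    finally show ?thesis .
  qed
  have Auk: "A *v u k \<in> V (m+1)" if "k < M" for k using AVm uVm[OF that] by auto
  have Ay_exp: "A *v y t = (\<Sum>k<M. x t k *\<^sub>R (A *v u k))"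
  proof -
    have "y t = (\<Sum>k<M. x t k *\<^sub>R u k)" using y_coords t M_def by blast
    then show ?thesis
      by (simp add: linear_sum[OF matrix_vector_mul_linear] linear_scale[OF matrix_vector_mul_linear])
  qed
  have coefj: "ip (u j) r = - (\<Sum>k\<in>{M'..<M}. ip (u j) (A *v u k) * x t k)"
    if j: "j \<in> {M..<N}" for j
  proof -
    have ujV: "u j \<in> V (m+1)" using uV j by auto
    have "r = (-1) *\<^sub>R diffop T K c y t + ((-1) *\<^sub>R (A *v y t) + w)"
      unfolding r_def by simp
    moreover have "(-1) *\<^sub>R (A *v y t) + w \<in> V (m+1)"
      using Ay wm VmV by (intro subspace_add[OF SV] subspace_scale[OF SV]) auto
    moreover have "ip (u j) ((-1) *\<^sub>R (A *v y t) + w) = - ip (u j) (A *v y t) + ip (u j) w"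
      using ip_lin_right[OF ip SV ujV Ay, of w "-1"] wm VmV by auto
    ultimately have "ip (u j) r = - ip (u j) (diffop T K c y t) + (- ip (u j) (A *v y t) + ip (u j) w)"
      using ip_lin_right[OF ip SV ujV, of "diffop T K c y t" "(-1) *\<^sub>R (A *v y t) + w" "-1"] Dy VmV
      by auto
    also have "\<dots> = - ip (u j) (A *v y t)"
      using orthVm[OF j] Dy wm by simp
    also have "ip (u j) (A *v y t) = (\<Sum>k<M. x t k * ip (u j) (A *v u k))"
      unfolding Ay_exp using ip_sum_right[OF ip SV ujV, of "{..<M}" "\<lambda>k. A *v u k" "x t"] Auk by simp
    also have "\<dots> = (\<Sum>k\<in>{M'..<M}. ip (u j) (A *v u k) * x t k)"
    proof -
      have sp: "{..<M} = {..<M'} \<union> {M'..<M}" using M'M by auto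
      have z: "ip (u j) (A *v u k) = 0" if k: "k < M'" for k
      proof -
        have m2: "m \<ge> 2" using k d0 M'_def m_pos by (cases "m = 1") auto
        have "k < d (m-1)" using k M'_def by simp
        moreover have "m-1 \<in> {1..m+1}" "m-1 \<in> {1..m}" using m2 by auto
        ultimately have "u k \<in> V (m-1)" using basis_in by blast
        moreover have "(\<lambda>v. A *v v) ` V (m-1) \<subseteq> V (Suc (m-1))" using A_inv \<open>m-1 \<in> {1..m}\<close> by blast
        moreover have "Suc (m-1) = m" using m2 by simp
        ultimately have "A *v u k \<in> V m" by (metis image_subset_iff)
        then show ?thesis using orthVm[OF j] by auto
      qed
      show ?thesis unfolding sp
        by (subst sum.union_disjoint) (auto simp: z mult.commute)
    qed
    finally show ?thesis .
  qed
  show "sqrt (ip (- diffop T K c y t - A *v y t + w) (- diffop T K c y t - A *v y t + w))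
           = sqrt (\<Sum>j\<in>{d m..<d (m+1)}.
                     (- (\<Sum>k\<in>{d (m-1)..<d m}. ip (u j) (A *v u k) * x t k))\<^sup>2)"
  proof -
    have "(\<Sum>j\<in>{M..<N}. (ip (u j) r)\<^sup>2)
        = (\<Sum>j\<in>{M..<N}. (- (\<Sum>k\<in>{M'..<M}. ip (u j) (A *v u k) * x t k))\<^sup>2)"
      by (rule sum.cong) (simp_all only: coefj)
    then have "sqrt (ip r r) = sqrt (\<Sum>j\<in>{M..<N}. (- (\<Sum>k\<in>{M'..<M}. ip (u j) (A *v u k) * x t k))\<^sup>2)"
      using rr2 by (simp only:)
    then show ?thesis unfolding r_def M_def N_def M'_def .
  qed
qed

end
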